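(* Let $n,d\ge 2$, $\mathcal T=\sum_{k=1}^{n+1}\mathbf v_k^{\otimes d}$, let $0\le s_k\le 1$ for $1\le k\le n-1$ and $s_n:=1-\sum_{k=1}^{n-1}s_k$. Then $\big(\sum_{k=1}^n s_k\mathbf v_k,\mu\big)$ is an eigenpair of $\mathcal T$ if and only if $$\mu s_k=\frac{1}{n^{d-1}}\Big(\big((n+1)s_k-1\big)^{d-1}-(-1)^{d-1}\Big),\qquad 1\le k\le n.$$
   Context: Simplex frame: for $n\ge 2$, $\mathbf v_k=\sqrt{1+\frac1n}\,\mathbf e_k-\frac{1}{n^{3/2}}(\sqrt{n+1}-1)\mathbf 1_n$ ($1\le k\le n$), $\mathbf v_{n+1}=-\frac{1}{\sqrt n}\mathbf 1_n$, where $\mathbf e_k$ are unit vectors of $\mathbb R^n$ and $\mathbf 1_n=(1,\ldots,1)^\top$; $\|\mathbf v_k\|=1$, $\langle\mathbf v_k,\mathbf v_j\rangle=-\frac1n$ ($k\ne j$), $\sum_k\mathbf v_k=\mathbf 0$. $\mathcal T=\sum_{k=1}^{n+1}\mathbf v_k^{\otimes d}$, $\mathcal T\cdot\mathbf v^{d-1}=\sum_{k}\langle\mathbf v,\mathbf v_k\rangle^{d-1}\mathbf v_k$; an eigenpair is $(\mathbf v,\mu)$ with $\mathbf v\neq\mathbf 0$ and $\mathcal T\cdot\mathbf v^{d-1}=\mu\mathbf v$. *)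

theory Defs
  imports Complex_Main
begin

text \<open>Vectors of R^n are represented as functions nat => real, of which only the
  components 0..n-1 matter. Indices are 0-based: the paper's e_k, v_k (1 <= k <= n)
  are index k-1 here, and v_{n+1} is index n.\<close>

definition sinner :: "nat \<Rightarrow> (nat \<Rightarrow> real) \<Rightarrow> (nat \<Rightarrow> real) \<Rightarrow> real" where
  "sinner n x y = (\<Sum>i<n. x i * y i)"

definition sframe :: "nat \<Rightarrow> nat \<Rightarrow> nat \<Rightarrow> real" where
  "sframe n k i =
     (if i < n then
        (if k < n then sqrt (1 + 1 / real n) * (if i = k then 1 else 0)
                       - (1 / (real n powr (3/2))) * (sqrt (real n + 1) - 1)
         else - 1 / sqrt (real n))
      else 0)"

text \<open>T . v^(d-1) = sum_k <v, v_k>^(d-1) v_k for T = sum_k v_k^{(x) d}.\<close>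
definition sframe_apply :: "nat \<Rightarrow> nat \<Rightarrow> (nat \<Rightarrow> real) \<Rightarrow> (nat \<Rightarrow> real)" where
  "sframe_apply n d v = (\<lambda>i. \<Sum>k\<le>n. (sinner n v (sframe n k)) ^ (d - 1) * sframe n k i)"

definition sframe_eigenpair :: "nat \<Rightarrow> nat \<Rightarrow> (nat \<Rightarrow> real) \<Rightarrow> real \<Rightarrow> bool" where
  "sframe_eigenpair n d v \<mu> \<longleftrightarrow>
     (\<exists>i<n. v i \<noteq> 0) \<and> (\<forall>i<n. sframe_apply n d v i = \<mu> * v i)"

end

theory Submission imports Defs begin
definition "salpha n = sqrt (1 + 1 / real n)"
definition "sbeta n = (1 / (real n powr (3/2))) * (sqrt (real n + 1) - 1)"

lemma sframe_lt: "i<n \<Longrightarrow> k<n \<Longrightarrow> sframe n k i = salpha n * (if i=k then 1 else 0) - sbeta n"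
  by (simp add: sframe_def salpha_def sbeta_def)
lemma sframe_n: "i<n \<Longrightarrow> sframe n n i = -1/sqrt n"
  by (simp add: sframe_def)

lemma frame_comb: assumes "i<n"
  shows "(\<Sum>k<n. b k * sframe n k i) = salpha n * b i - sbeta n * (\<Sum>k<n. b k)"
proof -
  have "(\<Sum>k<n. b k * sframe n k i) = (\<Sum>k<n. salpha n * (if k = i then b k else 0) - sbeta n * b k)"
    using assms by (intro sum.cong) (auto simp: sframe_lt algebra_simps)
  also have "\<dots> = salpha n * (\<Sum>k<n. (if k = i then b k else 0)) - sbeta n * (\<Sum>k<n. b k)"
    by (simp only: sum_subtractf sum_distrib_left)
  also have "(\<Sum>k<n. (if k = i then b k else 0)) = b i" using assms by simp
  finally show ?thesis .
qed

lemma frame_dot: assumes "k<n"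
  shows "(\<Sum>i<n. f i * sframe n k i) = salpha n * f k - sbeta n * (\<Sum>i<n. f i)"
proof -
  have "(\<Sum>i<n. f i * sframe n k i) = (\<Sum>i<n. salpha n * (if i = k then f i else 0) - sbeta n * f i)"
    using assms by (intro sum.cong) (auto simp: sframe_lt algebra_simps)
  also have "\<dots> = salpha n * (\<Sum>i<n. (if i = k then f i else 0)) - sbeta n * (\<Sum>i<n. f i)"
    by (simp only: sum_subtractf sum_distrib_left)
  also have "(\<Sum>i<n. (if i = k then f i else 0)) = f k" using assms by simp
  finally show ?thesis .
qed

lemma powr32: "n>0 \<Longrightarrow> real n powr (3/2) = real n * sqrt (real n)"
proof -
  assume "n>0"
  have "real n powr (3/2) = real n powr (1 + 1/2)" by simp
  also have "\<dots> = real n powr 1 * real n powr (1/2)" by (rule powr_add)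
  finally show ?thesis using \<open>n>0\<close> by (simp add: powr_half_sqrt)
qed

lemma alpha_eq: "n>0 \<Longrightarrow> salpha n = sqrt (real n + 1) / sqrt (real n)"
proof -
  assume "n>0"
  have "1 + 1 / real n = (real n + 1) / real n" using \<open>n>0\<close> by (simp add: field_simps)
  thus ?thesis unfolding salpha_def by (simp add: real_sqrt_divide)
qed

lemma beta_eq: "n>0 \<Longrightarrow> sbeta n = (sqrt (real n + 1) - 1) / (real n * sqrt (real n))"
  by (simp add: sbeta_def powr32)

lemma L2: assumes "n>0" shows "salpha n - real n * sbeta n = 1/sqrt n"
proof -
  have "sqrt (real n) > 0" using assms by simp
  thus ?thesis using assms by (simp add: alpha_eq beta_eq field_simps)
qed

lemma L3: assumes "n>0" shows "salpha n ^ 2 = (real n + 1)/ real n"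
  using assms by (simp add: alpha_eq power_divide)

lemma L4: assumes "n>0" shows "real n * sbeta n ^ 2 - 2 * salpha n * sbeta n = -1 / real n"
proof -
  define r where "r = sqrt (real n)"
  define t where "t = sqrt (real n + 1)"
  have r: "r > 0" "r^2 = real n" using assms by (auto simp: r_def)
  have t: "t^2 = real n + 1" by (simp add: t_def)
  have "real n * sbeta n ^ 2 - 2 * salpha n * sbeta n
      = real n * ((t-1)/(real n * r))^2 - 2 * (t/r) * ((t-1)/(real n * r))"
    using assms by (simp add: alpha_eq beta_eq r_def t_def)
  also have "\<dots> = ((t-1)^2 - 2*t*(t-1)) / (r*r*r*r)"
  proof -
    have rn: "real n = r*r" using r by (simp add: power2_eq_square)
    show ?thesis unfolding rn using r(1) by (simp add: field_simps power2_eq_square)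
  qed
  also have "\<dots> = (1 - t^2) / (real n * real n)"
    using r by (simp add: power2_eq_square algebra_simps)
  also have "\<dots> = -1 / real n" using t assms by (simp add: field_simps)
  finally show ?thesis .
qed

lemma alpha_pos: "n>0 \<Longrightarrow> salpha n > 0" by (simp add: salpha_def add_pos_nonneg)

theorem mainTheorem3:
  fixes n d :: nat and s :: "nat \<Rightarrow> real" and \<mu> :: real
  assumes "n \<ge> 2" and "d \<ge> 2"
    and "\<And>k. k < n - 1 \<Longrightarrow> 0 \<le> s k \<and> s k \<le> 1"
    and "s (n - 1) = 1 - (\<Sum>k<n - 1. s k)"
  shows "sframe_eigenpair n d (\<lambda>i. \<Sum>k<n. s k * sframe n k i) \<mu> \<longleftrightarrow>
         (\<forall>k<n. \<mu> * s k =
            (1 / real n ^ (d - 1)) * (((real n + 1) * s k - 1) ^ (d - 1) - (-1) ^ (d - 1)))"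
proof -
  have n0: "n > 0" using assms(1) by simp
  define a where "a = salpha n"
  define b where "b = sbeta n"
  define v where "v = (\<lambda>i. \<Sum>k<n. s k * sframe n k i)"
  have apos: "a > 0" using n0 alpha_pos a_def by simp
  have sq0: "sqrt (real n) > 0" using n0 by simp
  have l2: "a - real n * b = 1 / sqrt n" using L2[OF n0] a_def b_def by simp
  have S: "(\<Sum>k<n. s k) = 1"
  proof -
    have "n = Suc (n - 1)" using n0 by simp
    hence "(\<Sum>k<n. s k) = (\<Sum>k<n-1. s k) + s (n-1)"
      by (metis sum.lessThan_Suc)
    thus ?thesis using assms(4) by simp
  qed
  have hv: "v i = a * s i - b" if "i < n" for i
    unfolding v_def a_def b_def using frame_comb[OF that, of s] S by simp
  have sumv: "(\<Sum>i<n. a * s i - b) = a - real n * b"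
    by (simp add: sum_subtractf sum_distrib_left[symmetric] S)
  have hc: "sinner n v (sframe n k) = ((real n + 1) * s k - 1) / real n" if "k < n" for k
  proof -
    have "sinner n v (sframe n k) = (\<Sum>i<n. (a * s i - b) * sframe n k i)"
      unfolding sinner_def by (rule sum.cong) (auto simp: hv)
    also have "\<dots> = a * (a * s k - b) - b * (a - real n * b)"
      using frame_dot[OF that, of "\<lambda>i. a * s i - b"] sumv a_def b_def by simp
    also have "\<dots> = a^2 * s k + (real n * b^2 - 2 * a * b)"
      by (simp add: algebra_simps power2_eq_square)
    also have "\<dots> = (real n + 1) / real n * s k + (-1 / real n)"
      using L3[OF n0] L4[OF n0] a_def b_def by simp
    also have "\<dots> = ((real n + 1) * s k - 1) / real n"
      using n0 by (simp add: field_simps)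
    finally show ?thesis .
  qed
  have hcn: "sinner n v (sframe n n) = -1 / real n"
  proof -
    have "sinner n v (sframe n n) = (\<Sum>i<n. (a * s i - b) * (-1 / sqrt n))"
      unfolding sinner_def by (rule sum.cong) (auto simp: hv sframe_n)
    also have "\<dots> = (a - real n * b) * (-1 / sqrt n)"
      by (simp only: sum_distrib_right[symmetric] sumv)
    also have "\<dots> = -1 / real n" unfolding l2 using sq0 n0
      by (simp add: field_simps)
    finally show ?thesis .
  qed
  define p where "p = (\<lambda>k. (sinner n v (sframe n k)) ^ (d - 1))"
  define q where "q = p n"
  define c where "c = (\<lambda>k. p k - q - \<mu> * s k)"
  have happ: "sframe_apply n d v i = a * p i - b * (\<Sum>k<n. p k) - q / sqrt n" if "i < n" for i
  proof -
    have "sframe_apply n d v i = (\<Sum>k<n. p k * sframe n k i) + p n * sframe n n i"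
      unfolding sframe_apply_def p_def by (simp add: lessThan_Suc_atMost[symmetric])
    thus ?thesis using frame_comb[OF that, of p] sframe_n[OF that] a_def b_def q_def by simp
  qed
  have key: "sframe_apply n d v i - \<mu> * v i = a * c i - b * (\<Sum>k<n. c k)" if "i < n" for i
  proof -
    have sc: "(\<Sum>k<n. c k) = (\<Sum>k<n. p k) - real n * q - \<mu>"
      unfolding c_def by (simp add: sum_subtractf sum_distrib_left[symmetric] S)
    have "q / sqrt n = q * (a - real n * b)" using l2 by simp
    thus ?thesis unfolding sc happ[OF that] hv[OF that] unfolding c_def
      by (simp add: algebra_simps)
  qed
  have nz: "\<exists>i<n. v i \<noteq> 0"
  proof (rule ccontr)
    assume "\<not> ?thesis"
    hence "\<forall>i<n. a * s i - b = 0" using hv by auto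
    hence "(\<Sum>i<n. a * s i - b) = 0" by simp
    thus False using sumv l2 sq0 by simp
  qed
  have eqv: "(\<forall>i<n. a * c i - b * (\<Sum>k<n. c k) = 0) \<longleftrightarrow> (\<forall>i<n. c i = 0)"
  proof
    assume h: "\<forall>i<n. a * c i - b * (\<Sum>k<n. c k) = 0"
    have "(\<Sum>i<n. a * c i - b * (\<Sum>k<n. c k)) = 0" using h by simp
    hence "a * (\<Sum>k<n. c k) - real n * b * (\<Sum>k<n. c k) = 0"
      by (simp add: sum_subtractf sum_distrib_left[symmetric])
    hence "(a - real n * b) * (\<Sum>k<n. c k) = 0" by (simp add: algebra_simps)
    hence B: "(\<Sum>k<n. c k) = 0" using l2 sq0 by simp
    show "\<forall>i<n. c i = 0" using h B apos by simp
  qed simp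
  have rhs: "(\<mu> * s k = (1 / real n ^ (d - 1)) * (((real n + 1) * s k - 1) ^ (d - 1) - (-1) ^ (d - 1)))
       \<longleftrightarrow> c k = 0" if "k < n" for k
  proof -
    have "(1 / real n ^ (d - 1)) * (((real n + 1) * s k - 1) ^ (d - 1) - (-1) ^ (d - 1))
        = (((real n + 1) * s k - 1) / real n) ^ (d - 1) - (-1 / real n) ^ (d - 1)"
    proof -
      have e1: "(-1 / real n) ^ (d - 1) = (-1) ^ (d - 1) / real n ^ (d - 1)" by (rule power_divide)
      have e2: "(((real n + 1) * s k - 1) / real n) ^ (d - 1) = ((real n + 1) * s k - 1) ^ (d - 1) / real n ^ (d - 1)" by (rule power_divide)
      show ?thesis unfolding e1 e2 by (simp add: diff_divide_distrib)
    qed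
    also have "\<dots> = p k - q" unfolding p_def q_def using hc[OF that] hcn by simp
    finally show ?thesis unfolding c_def by auto
  qed
  have "sframe_eigenpair n d v \<mu> \<longleftrightarrow> (\<forall>i<n. sframe_apply n d v i - \<mu> * v i = 0)"
    unfolding sframe_eigenpair_def using nz by auto
  also have "\<dots> \<longleftrightarrow> (\<forall>i<n. c i = 0)" using key eqv by simp
  also have "\<dots> \<longleftrightarrow> (\<forall>k<n. \<mu> * s k =
            (1 / real n ^ (d - 1)) * (((real n + 1) * s k - 1) ^ (d - 1) - (-1) ^ (d - 1)))"
    using rhs by auto
  finally show ?thesis unfolding v_def .
qed
end
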